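(* For $\Pi$-almost every environment $\xi$, $\mathbb{P}_\xi$-almost surely $$\frac1t\,[Y]_t\longrightarrow \eta^2\qquad(t\to\infty),$$ where $[Y]_t$ is the $n\times n$ matrix with entries $([Y]_t)_{ij}=\sum_{0\le r<t}(Y^i_{r+1}-Y^i_r)(Y^j_{r+1}-Y^j_r)$ and $(\eta^2)_{ij}=\sum_{u\in\mathbb{Z}^n}(u_i-b_i)(u_j-b_j)\bar P(u)$.
   Context: Let $\mathbb{S}$ be a finite set and $\pi$ a probability measure on $\mathbb{S}$. The environment $\xi=\{\xi_t(x): x\in\mathbb{Z}^n, t\in\mathbb{Z}^+\}$ consists of i.i.d. $\mathbb{S}$-valued random variables with law $\pi$; $\Pi$ denotes its law. Let $P_0$ be a probability distribution on $\mathbb{Z}^n$ and $c:\mathbb{Z}^n\times\mathbb{S}\to\mathbb{R}$ such that: $0\le P_0(u)+c(u,s)\le 1$ for all $u,s$; $\sum_{u}c(u,s)=0$ for all $s$; $\sum_{s}c(u,s)\pi(s)=0$ for all $u$; $P_0$ and $c$ have bounded range; and there is $b^c\in\mathbb{R}^n$ with $\sum_u u\,c(u,s)=b^c$ for all $s$. Given $\xi$, $(X_t)$ is the Markov chain on $\mathbb{Z}^n$ (from a fixed starting point) with $\mathbb{P}(X_{t+1}=y\mid X_t=x,\xi)=P_0(y-x)+c(y-x,\xi_t(x))$; $\mathbb{P}_\xi$ denotes this quenched law. Let $\bar P(u)=P_0(u)+\sum_s\pi(s)c(u,s)$, $b^0=\sum_u uP_0(u)$, $b=b^0+b^c$, $Y_t=X_t-tb$,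 with coordinates $Y^i_t$. *)

theory Defs
  imports "HOL-Probability.Probability"
begin

text \<open>Sites of the lattice Z^n are vectors int^'n; the environment is a function
  xi :: nat \<times> (int^'n) \<Rightarrow> 'S with xi (t,x) = xi_t(x).\<close>

definition env_law :: "'S pmf \<Rightarrow> (nat \<times> (int^'n) \<Rightarrow> 'S) measure" where
  "env_law \<pi> = PiM UNIV (\<lambda>_. measure_pmf \<pi>)"

definition trans_prob ::
  "((int^'n) \<Rightarrow> real) \<Rightarrow> ((int^'n) \<Rightarrow> 'S \<Rightarrow> real) \<Rightarrow> (nat \<times> (int^'n) \<Rightarrow> 'S)
     \<Rightarrow> nat \<Rightarrow> int^'n \<Rightarrow> int^'n \<Rightarrow> real" where
  "trans_prob P0 c \<xi> t x y = P0 (y - x) + c (y - x) (\<xi> (t, x))"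

definition quenched_chain ::
  "((int^'n) \<Rightarrow> real) \<Rightarrow> ((int^'n) \<Rightarrow> 'S \<Rightarrow> real) \<Rightarrow> (nat \<times> (int^'n) \<Rightarrow> 'S)
     \<Rightarrow> int^'n \<Rightarrow> 'w measure \<Rightarrow> (nat \<Rightarrow> 'w \<Rightarrow> int^'n) \<Rightarrow> bool" where
  "quenched_chain P0 c \<xi> x0 M X \<longleftrightarrow>
     prob_space M \<and>
     (\<forall>t. X t \<in> M \<rightarrow>\<^sub>M count_space UNIV) \<and>
     measure M {\<omega> \<in> space M. X 0 \<omega> = x0} = 1 \<and>
     (\<forall>t (xs :: nat \<Rightarrow> int^'n).
        measure M {\<omega> \<in> space M. \<forall>s\<le>Suc t. X s \<omega> = xs s} =
        measure M {\<omega> \<in> space M. \<forall>s\<le>t. X s \<omega> = xs s} * trans_prob P0 c \<xi> t (xs t) (xs (Suc t)))"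

text \<open>Quadratic variation matrix [Y]_t of Y_t = X_t - t b.\<close>
definition quad_var :: "real^'n \<Rightarrow> (nat \<Rightarrow> 'w \<Rightarrow> int^'n) \<Rightarrow> nat \<Rightarrow> 'w \<Rightarrow> real^'n^'n" where
  "quad_var b X t \<omega> = (\<chi> i j. \<Sum>r<t.
      (real_of_int (X (Suc r) \<omega> $ i) - real (Suc r) * b $ i - (real_of_int (X r \<omega> $ i) - real r * b $ i)) *
      (real_of_int (X (Suc r) \<omega> $ j) - real (Suc r) * b $ j - (real_of_int (X r \<omega> $ j) - real r * b $ j)))"

end

theory Submission
  imports Defs
begin


definition pth :: "int^'n \<Rightarrow> (nat \<Rightarrow> int^'n) \<Rightarrow> nat \<Rightarrow> int^'n" where
  "pth x0 us s = x0 + (\<Sum>r<s. us r)"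

definition PS :: "(int^'n) set \<Rightarrow> nat \<Rightarrow> (nat \<Rightarrow> int^'n) set" where
  "PS U t = PiE {..<t} (\<lambda>_. U)"

lemma pth_upd: "r \<le> t \<Longrightarrow> pth x0 (us(t:=u)) r = pth x0 us r"
  unfolding pth_def by (intro arg_cong[where f="\<lambda>z. x0 + z"] sum.cong) auto

lemma pth_Suc: "pth x0 us (Suc r) = pth x0 us r + us r"
  unfolding pth_def by (simp add: add.assoc)

lemma pth_0[simp]: "pth x0 us 0 = x0"
  unfolding pth_def by simp

lemma PS_finite: "finite U \<Longrightarrow> finite (PS U t)"
  unfolding PS_def by (intro finite_PiE) auto

lemma sum_PS_Suc:
  fixes G :: "(nat \<Rightarrow> int^'n) \<Rightarrow> 'b::comm_monoid_add"
  assumes "finite U"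
  shows "(\<Sum>us\<in>PS U (Suc t). G us) = (\<Sum>us\<in>PS U t. \<Sum>u\<in>U. G (us(t:=u)))"
proof -
  have e: "{..<Suc t} = insert t {..<t}" by auto
  have inj: "inj_on (\<lambda>(y, g). g(t := y)) (U \<times> PS U t)"
  proof (rule inj_onI)
    fix p q assume p: "p \<in> U \<times> PS U t" and q: "q \<in> U \<times> PS U t"
      and eq0: "(\<lambda>(y, g). g(t := y)) p = (\<lambda>(y, g). g(t := y)) q"
    obtain y g where pe: "p = (y,g)" by fastforce
    obtain y' g' where qe: "q = (y',g')" by fastforce
    have eq: "g(t:=y) = g'(t:=y')" using eq0 pe qe by simp
    have gt: "g t = undefined" "g' t = undefined" using p q pe qe by (auto simp: PS_def PiE_def extensional_def)
    have yy: "y = y'" using fun_cong[OF eq, of t] by simp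
    have oth: "g x = g' x" if "x \<noteq> t" for x using fun_cong[OF eq, of x] that by simp
    have "g = g'"
    proof
      fix x show "g x = g' x" using gt oth by (cases "x = t") auto
    qed
    then show "p = q" using pe qe yy by simp
  qed
  have "(\<Sum>us\<in>PS U (Suc t). G us) = (\<Sum>us\<in>(\<lambda>(y, g). g(t := y)) ` (U \<times> PS U t). G us)"
    unfolding PS_def e PiE_insert_eq by simp
  also have "\<dots> = (\<Sum>p\<in>U \<times> PS U t. G ((\<lambda>(y, g). g(t := y)) p))"
    by (subst sum.reindex[OF inj]) (simp add: case_prod_unfold comp_def)
  also have "\<dots> = (\<Sum>y\<in>U. \<Sum>g\<in>PS U t. G (g(t:=y)))"
    by (simp add: sum.cartesian_product case_prod_unfold)
  also have "\<dots> = (\<Sum>g\<in>PS U t. \<Sum>y\<in>U. G (g(t:=y)))"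
    by (rule sum.swap)
  finally show ?thesis .
qed

locale rw =
  fixes \<pi> :: "'S::finite pmf" and P0 :: "int^'n \<Rightarrow> real" and c :: "int^'n \<Rightarrow> 'S \<Rightarrow> real"
    and U :: "(int^'n) set" and x0 :: "int^'n"
  assumes finU: "finite U"
    and sumP0: "(\<Sum>u\<in>U. P0 u) = 1" and sumc: "\<And>s. (\<Sum>u\<in>U. c u s) = 0"
    and tb0: "\<And>u s. 0 \<le> P0 u + c u s" and tb1: "\<And>u s. P0 u + c u s \<le> 1"
    and cmean: "\<And>u. (\<Sum>s\<in>UNIV. c u s * pmf \<pi> s) = 0"
begin

definition wt :: "(nat \<times> (int^'n) \<Rightarrow> 'S) \<Rightarrow> nat \<Rightarrow> (nat \<Rightarrow> int^'n) \<Rightarrow> real" where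
  "wt \<xi> t us = (\<Prod>r<t. P0 (us r) + c (us r) (\<xi> (r, pth x0 us r)))"

definition Q :: "(int^'n \<Rightarrow> real) \<Rightarrow> nat \<Rightarrow> (nat \<times> (int^'n) \<Rightarrow> 'S) \<Rightarrow> nat \<Rightarrow> real" where
  "Q f k \<xi> t = (\<Sum>us\<in>PS U t. (\<Sum>r<t. f (us r)) ^ k * wt \<xi> t us)"

lemma wt_nonneg: "0 \<le> wt \<xi> t us"
  unfolding wt_def by (intro prod_nonneg) (use tb0 in auto)

lemma wt_le1: "wt \<xi> t us \<le> 1"
  unfolding wt_def by (intro prod_le_1) (use tb0 tb1 in auto)

lemma wt_Suc_upd: "wt \<xi> (Suc t) (us(t:=u)) = wt \<xi> t us * (P0 u + c u (\<xi> (t, pth x0 us t)))"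
proof -
  have "wt \<xi> (Suc t) (us(t:=u)) = (\<Prod>r<t. P0 ((us(t:=u)) r) + c ((us(t:=u)) r) (\<xi> (r, pth x0 (us(t:=u)) r)))
     * (P0 u + c u (\<xi> (t, pth x0 (us(t:=u)) t)))"
    unfolding wt_def by simp
  also have "(\<Prod>r<t. P0 ((us(t:=u)) r) + c ((us(t:=u)) r) (\<xi> (r, pth x0 (us(t:=u)) r))) = wt \<xi> t us"
    unfolding wt_def by (intro prod.cong refl) (auto simp: pth_upd)
  also have "pth x0 (us(t:=u)) t = pth x0 us t" by (rule pth_upd) simp
  finally show ?thesis .
qed

lemma Sf_Suc_upd: "(\<Sum>r<Suc t. f ((us(t:=u)) r)) = (\<Sum>r<t. f (us r)) + (f u :: real)"
proof -
  have "(\<Sum>r<t. f ((us(t:=u)) r)) = (\<Sum>r<t. f (us r))" by (intro sum.cong) auto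
  then show ?thesis by simp
qed

lemma sum_wt: "(\<Sum>us\<in>PS U t. wt \<xi> t us) = 1"
proof (induction t)
  case 0
  then show ?case by (simp add: PS_def wt_def)
next
  case (Suc t)
  have "(\<Sum>us\<in>PS U (Suc t). wt \<xi> (Suc t) us) = (\<Sum>us\<in>PS U t. \<Sum>u\<in>U. wt \<xi> (Suc t) (us(t:=u)))"
    by (rule sum_PS_Suc[OF finU])
  also have "\<dots> = (\<Sum>us\<in>PS U t. wt \<xi> t us * (\<Sum>u\<in>U. P0 u + c u (\<xi> (t, pth x0 us t))))"
    by (simp add: wt_Suc_upd sum_distrib_left)
  also have "\<dots> = (\<Sum>us\<in>PS U t. wt \<xi> t us)"
    by (simp add: sum.distrib sumP0 sumc)
  finally show ?case using Suc by simp
qed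

lemma Q_Suc: "Q f k \<xi> (Suc t) = (\<Sum>us\<in>PS U t. wt \<xi> t us *
   (\<Sum>u\<in>U. ((\<Sum>r<t. f (us r)) + f u) ^ k * (P0 u + c u (\<xi> (t, pth x0 us t)))))"
  unfolding Q_def
  by (subst sum_PS_Suc[OF finU]) (simp add: wt_Suc_upd Sf_Suc_upd sum_distrib_left mult_ac)

lemma Q_0: "Q f k \<xi> 0 = (if k = 0 then 1 else 0)"
  by (simp add: Q_def PS_def wt_def)

end

lemma mom4_pt:
  fixes S f K :: real assumes "\<bar>f\<bar> \<le> K"
  shows "(S + f) ^ 4 \<le> S^4 + 4*S^3*f + (6*K^2 + 4*K^3)*S^2 + (4*K^3 + K^4)"
proof -
  have K0: "0 \<le> K" using assms by linarith
  have e: "(S + f) ^ 4 = S^4 + 4*S^3*f + 6*S^2*f^2 + 4*S*f^3 + f^4" by algebra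
  have f2: "f^2 \<le> K^2" using assms by (metis abs_le_square_iff abs_of_nonneg K0 power2_abs)
  have "f^4 = (f^2)^2" by simp
  also have "\<dots> \<le> (K^2)^2" by (rule power_mono[OF f2]) simp
  finally have f4: "f^4 \<le> K^4" by simp
  have "\<bar>f^3\<bar> \<le> K^3" using assms by (simp add: power_abs power_mono)
  then have "4*S*f^3 \<le> 4*\<bar>S\<bar>*K^3"
  proof -
    assume h: "\<bar>f^3\<bar> \<le> K^3"
    have "4*S*f^3 \<le> \<bar>4*S*f^3\<bar>" by simp
    also have "\<dots> = 4*\<bar>S\<bar>*\<bar>f^3\<bar>" by (simp add: abs_mult)
    also have "\<dots> \<le> 4*\<bar>S\<bar>*K^3" using h by (intro mult_left_mono) auto
    finally show ?thesis .
  qed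
  also have "\<dots> \<le> 4*(1 + S^2)*K^3"
  proof -
    have "0 \<le> (\<bar>S\<bar> - 1)^2" by simp
    then have "2*\<bar>S\<bar> \<le> 1 + \<bar>S\<bar>^2" by (simp add: power2_eq_square algebra_simps)
    then have "\<bar>S\<bar> \<le> 1 + S^2" by (simp add: power2_abs)
    then show ?thesis using K0 by (intro mult_right_mono mult_left_mono) auto
  qed
  finally have t3: "4*S*f^3 \<le> 4*K^3 + 4*K^3*S^2" by (simp add: algebra_simps)
  have t2: "6*S^2*f^2 \<le> 6*K^2*S^2" using mult_left_mono[OF f2, of "6*S^2"] by (simp add: mult_ac)
  show ?thesis unfolding e using t2 t3 f4 by (simp add: algebra_simps)
qed

lemma mom2_pt:
  fixes S f K :: real assumes "\<bar>f\<bar> \<le> K"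
  shows "(S + f) ^ 2 \<le> S^2 + 2*S*f + K^2"
proof -
  have K0: "0 \<le> K" using assms by linarith
  have "f^2 \<le> K^2" using assms by (metis abs_le_square_iff abs_of_nonneg K0 power2_abs)
  then show ?thesis by (simp add: power2_eq_square algebra_simps)
qed

lemma wsum_mono_bound:
  fixes p g h :: "'a \<Rightarrow> real"
  assumes "finite A" "\<And>u. u \<in> A \<Longrightarrow> 0 \<le> p u" "\<And>u. u \<in> A \<Longrightarrow> g u \<le> h u"
  shows "(\<Sum>u\<in>A. g u * p u) \<le> (\<Sum>u\<in>A. h u * p u)"
  using assms by (intro sum_mono mult_right_mono) auto


context rw begin

definition gam :: "(int^'n \<Rightarrow> real) \<Rightarrow> 'S \<Rightarrow> real" where
  "gam f s = (\<Sum>u\<in>U. f u * (P0 u + c u s))"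

definition Kf :: "(int^'n \<Rightarrow> real) \<Rightarrow> real" where
  "Kf f = (\<Sum>u\<in>U. \<bar>f u\<bar>)"

definition T :: "(int^'n \<Rightarrow> real) \<Rightarrow> nat \<Rightarrow> (nat \<times> (int^'n) \<Rightarrow> 'S) \<Rightarrow> nat \<Rightarrow> real" where
  "T f k \<xi> t = (\<Sum>us\<in>PS U t. (\<Sum>r<t. f (us r)) ^ k * wt \<xi> t us * gam f (\<xi> (t, pth x0 us t)))"

lemma Kf_bound: "u \<in> U \<Longrightarrow> \<bar>f u\<bar> \<le> Kf f"
  unfolding Kf_def by (rule member_le_sum) (auto simp: finU)

lemma Kf_nonneg: "0 \<le> Kf f"
  unfolding Kf_def by (intro sum_nonneg) auto

lemma inner_bound:
  fixes S :: real and g :: "real \<Rightarrow> real" and h :: "real \<Rightarrow> real"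
  assumes "\<And>x. \<bar>x\<bar> \<le> Kf f \<Longrightarrow> g (S + x) \<le> h x"
  shows "(\<Sum>u\<in>U. g (S + f u) * (P0 u + c u s)) \<le> (\<Sum>u\<in>U. h (f u) * (P0 u + c u s))"
  using assms Kf_bound by (intro wsum_mono_bound finU tb0) auto

lemma Q4_step:
  "Q f 4 \<xi> (Suc t) \<le> Q f 4 \<xi> t + 4 * T f 3 \<xi> t + (6*Kf f^2 + 4*Kf f^3) * Q f 2 \<xi> t + (4*Kf f^3 + Kf f^4)"
proof -
  let ?K = "Kf f"
  have inner: "(\<Sum>u\<in>U. (S + f u) ^ 4 * (P0 u + c u s)) \<le>
       S^4 + 4*S^3*gam f s + (6*?K^2 + 4*?K^3)*S^2 + (4*?K^3 + ?K^4)" for S s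
  proof -
    have "(\<Sum>u\<in>U. (S + f u) ^ 4 * (P0 u + c u s)) \<le>
       (\<Sum>u\<in>U. (S^4 + 4*S^3*f u + (6*?K^2 + 4*?K^3)*S^2 + (4*?K^3 + ?K^4)) * (P0 u + c u s))"
      by (rule inner_bound[where g="\<lambda>y. y^4"]) (rule mom4_pt)
    also have "\<dots> = (S^4 + (6*?K^2 + 4*?K^3)*S^2 + (4*?K^3 + ?K^4)) * (\<Sum>u\<in>U. (P0 u + c u s))
        + 4*S^3*gam f s"
      by (simp add: gam_def algebra_simps sum.distrib sum_distrib_left sum_distrib_right)
    also have "(\<Sum>u\<in>U. (P0 u + c u s)) = 1" by (simp add: sum.distrib sumP0 sumc)
    finally show ?thesis by simp
  qed
  have "Q f 4 \<xi> (Suc t) \<le> (\<Sum>us\<in>PS U t. wt \<xi> t us *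
     ((\<Sum>r<t. f (us r))^4 + 4*(\<Sum>r<t. f (us r))^3*gam f (\<xi> (t, pth x0 us t))
      + (6*?K^2 + 4*?K^3)*(\<Sum>r<t. f (us r))^2 + (4*?K^3 + ?K^4)))"
    unfolding Q_Suc by (intro sum_mono mult_left_mono inner wt_nonneg)
  also have "\<dots> = Q f 4 \<xi> t + 4 * T f 3 \<xi> t + (6*?K^2 + 4*?K^3) * Q f 2 \<xi> t
      + (4*?K^3 + ?K^4) * (\<Sum>us\<in>PS U t. wt \<xi> t us)"
    by (simp add: Q_def T_def algebra_simps sum.distrib sum_distrib_left sum_distrib_right)
  finally show ?thesis by (simp add: sum_wt)
qed

lemma Q2_step:
  "Q f 2 \<xi> (Suc t) \<le> Q f 2 \<xi> t + 2 * T f 1 \<xi> t + Kf f^2"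
proof -
  let ?K = "Kf f"
  have inner: "(\<Sum>u\<in>U. (S + f u) ^ 2 * (P0 u + c u s)) \<le> S^2 + 2*S*gam f s + ?K^2" for S s
  proof -
    have "(\<Sum>u\<in>U. (S + f u) ^ 2 * (P0 u + c u s)) \<le>
       (\<Sum>u\<in>U. (S^2 + 2*S*f u + ?K^2) * (P0 u + c u s))"
      by (rule inner_bound[where g="\<lambda>y. y^2"]) (rule mom2_pt)
    also have "\<dots> = (S^2 + ?K^2) * (\<Sum>u\<in>U. (P0 u + c u s)) + 2*S*gam f s"
      by (simp add: gam_def algebra_simps sum.distrib sum_distrib_left sum_distrib_right)
    also have "(\<Sum>u\<in>U. (P0 u + c u s)) = 1" by (simp add: sum.distrib sumP0 sumc)
    finally show ?thesis by simp
  qed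
  have "Q f 2 \<xi> (Suc t) \<le> (\<Sum>us\<in>PS U t. wt \<xi> t us *
     ((\<Sum>r<t. f (us r))^2 + 2*(\<Sum>r<t. f (us r))*gam f (\<xi> (t, pth x0 us t)) + ?K^2))"
    unfolding Q_Suc by (intro sum_mono mult_left_mono inner wt_nonneg)
  also have "\<dots> = Q f 2 \<xi> t + 2 * T f 1 \<xi> t + ?K^2 * (\<Sum>us\<in>PS U t. wt \<xi> t us)"
    by (simp add: Q_def T_def algebra_simps sum.distrib sum_distrib_left sum_distrib_right)
  finally show ?thesis by (simp add: sum_wt)
qed

end



lemma pps_pmf: "product_prob_space (\<lambda>_. measure_pmf (\<pi>::'a pmf))"
  by (simp add: product_prob_space_def product_prob_space_axioms_def product_sigma_finite_def
      prob_space_measure_pmf prob_space_imp_sigma_finite)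

lemma ps_PiM_pmf: "prob_space (PiM I (\<lambda>_. measure_pmf (\<pi>::'a pmf)))"
proof -
  interpret product_prob_space "\<lambda>_. measure_pmf \<pi>" I by (rule pps_pmf)
  show ?thesis by (rule P.prob_space_axioms)
qed

lemma borel_pmf_any: "h \<in> borel_measurable (measure_pmf (\<pi>::'a pmf))"
  by (subst measurable_cong_sets[OF sets_measure_pmf_count_space refl]) simp

lemma coord_meas: "(\<lambda>\<xi>. \<xi> j) \<in> PiM UNIV (\<lambda>_. measure_pmf \<pi>) \<rightarrow>\<^sub>M measure_pmf \<pi>"
  by (rule measurable_component_singleton) simp

lemma coord_fun_meas: "(\<lambda>\<xi>. h (\<xi> j)) \<in> borel_measurable (PiM UNIV (\<lambda>_. measure_pmf (\<pi>::'a pmf)))"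
  by (rule measurable_compose[OF coord_meas borel_pmf_any])

lemma integral_coord:
  fixes \<pi> :: "'a::finite pmf" and h :: "'a \<Rightarrow> real"
  shows "(\<integral>\<xi>. h (\<xi> j) \<partial>PiM UNIV (\<lambda>_. measure_pmf \<pi>)) = (\<Sum>s\<in>UNIV. pmf \<pi> s * h s)"
proof -
  interpret product_prob_space "\<lambda>_. measure_pmf \<pi>" UNIV by (rule pps_pmf)
  have "(\<integral>\<xi>. h (\<xi> j) \<partial>PiM UNIV (\<lambda>_. measure_pmf \<pi>)) =
      (\<integral>s. h s \<partial>distr (PiM UNIV (\<lambda>_. measure_pmf \<pi>)) (measure_pmf \<pi>) (\<lambda>\<xi>. \<xi> j))"
    by (rule integral_distr[symmetric]) (auto intro: coord_meas borel_pmf_any)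
  also have "distr (PiM UNIV (\<lambda>_. measure_pmf \<pi>)) (measure_pmf \<pi>) (\<lambda>\<xi>. \<xi> j) = measure_pmf \<pi>"
    by (rule PiM_component) simp
  also have "(\<integral>s. h s \<partial>measure_pmf \<pi>) = (\<Sum>s\<in>UNIV. pmf \<pi> s * h s)"
    by (subst integral_measure_pmf[of UNIV]) auto
  finally show ?thesis .
qed

lemma indep_coords:
  "prob_space.indep_vars (PiM UNIV (\<lambda>_. measure_pmf \<pi>)) (\<lambda>_. measure_pmf \<pi>) (\<lambda>i \<xi>. \<xi> i) UNIV"
proof -
  interpret product_prob_space "\<lambda>_. measure_pmf \<pi>" UNIV by (rule pps_pmf)
  show ?thesis
  proof (subst P.indep_vars_iff_distr_eq_PiM)
    show "distr (PiM UNIV (\<lambda>_. measure_pmf \<pi>)) (Pi\<^sub>M UNIV (\<lambda>_. measure_pmf \<pi>)) (\<lambda>x. restrict (\<lambda>i. x i) UNIV) =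
      Pi\<^sub>M UNIV (\<lambda>i. distr (PiM UNIV (\<lambda>_. measure_pmf \<pi>)) (measure_pmf \<pi>) (\<lambda>x. x i))"
      by (simp add: restrict_UNIV PiM_component)
  qed (auto intro: coord_meas)
qed

lemma env_indep:
  fixes \<pi> :: "'a::finite pmf" and h :: "'a \<Rightarrow> real" and J :: "'i set"
  assumes j: "j \<notin> J"
    and F'm: "F' \<in> borel_measurable (PiM J (\<lambda>_. measure_pmf \<pi>))"
    and F'b: "\<And>\<eta>. \<bar>F' \<eta>\<bar> \<le> B"
  shows "(\<integral>\<xi>. F' (restrict \<xi> J) * h (\<xi> j) \<partial>PiM UNIV (\<lambda>_. measure_pmf \<pi>)) =
     (\<integral>\<xi>. F' (restrict \<xi> J) \<partial>PiM UNIV (\<lambda>_. measure_pmf \<pi>)) * (\<Sum>s\<in>UNIV. pmf \<pi> s * h s)"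
proof -
  let ?P = "PiM UNIV (\<lambda>_. measure_pmf \<pi>) :: ('i \<Rightarrow> 'a) measure"
  interpret product_prob_space "\<lambda>_. measure_pmf \<pi>" UNIV by (rule pps_pmf)
  have iv: "P.indep_var (PiM J (\<lambda>_. measure_pmf \<pi>)) (\<lambda>\<xi>. restrict (\<lambda>i. \<xi> i) J)
        (PiM {j} (\<lambda>_. measure_pmf \<pi>)) (\<lambda>\<xi>. restrict (\<lambda>i. \<xi> i) {j})"
    by (rule P.indep_var_restrict[OF indep_coords]) (use j in auto)
  have hm: "(\<lambda>\<eta>. h (\<eta> j)) \<in> borel_measurable (PiM {j} (\<lambda>_. measure_pmf \<pi>))"
    by (rule measurable_compose[where N="measure_pmf \<pi>", OF _ borel_pmf_any])
       (rule measurable_component_singleton[where M="\<lambda>_. measure_pmf \<pi>"], simp)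
  have iv2: "P.indep_var borel (F' \<circ> (\<lambda>\<xi>. restrict (\<lambda>i. \<xi> i) J)) borel ((\<lambda>\<eta>. h (\<eta> j)) \<circ> (\<lambda>\<xi>. restrict (\<lambda>i. \<xi> i) {j}))"
    by (rule P.indep_var_compose[OF iv F'm hm])
  have e1: "F' \<circ> (\<lambda>\<xi>. restrict (\<lambda>i. \<xi> i) J) = (\<lambda>\<xi>. F' (restrict \<xi> J))" by (simp add: comp_def)
  have e2: "(\<lambda>\<eta>. h (\<eta> j)) \<circ> (\<lambda>\<xi>. restrict (\<lambda>i. \<xi> i) {j}) = (\<lambda>\<xi>. h (\<xi> j))" by (simp add: comp_def)
  have m1: "(\<lambda>\<xi>. F' (restrict \<xi> J)) \<in> borel_measurable ?P"
    by (rule measurable_compose[OF _ F'm]) (rule measurable_restrict_subset, simp)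
  have i1: "integrable ?P (\<lambda>\<xi>. F' (restrict \<xi> J))"
    by (rule P.integrable_const_bound[where B=B]) (use F'b m1 in auto)
  have i2: "integrable ?P (\<lambda>\<xi>. h (\<xi> j))"
    by (rule P.integrable_const_bound[where B="\<Sum>s\<in>UNIV. \<bar>h s\<bar>"])
       (auto intro!: member_le_sum coord_fun_meas)
  show ?thesis
    using P.indep_var_lebesgue_integral[OF iv2[unfolded e1 e2] i1 i2] integral_coord[where h=h and j=j and \<pi>=\<pi>] by simp
qed



context rw begin

abbreviation "Pi_env \<equiv> PiM UNIV (\<lambda>_. measure_pmf \<pi>) :: (nat \<times> (int^'n) \<Rightarrow> 'S) measure"

lemma env_ps: "prob_space Pi_env" by (rule ps_PiM_pmf)

lemma env_fm: "finite_measure Pi_env" using env_ps unfolding prob_space_def by simp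

lemma wt_meas: "(\<lambda>\<xi>. wt \<xi> t us) \<in> borel_measurable Pi_env"
  unfolding wt_def
proof (intro borel_measurable_prod)
  fix r
  show "(\<lambda>\<xi>. P0 (us r) + c (us r) (\<xi> (r, pth x0 us r))) \<in> borel_measurable Pi_env"
    by (rule measurable_compose[OF coord_meas[of "(r, pth x0 us r)"] borel_pmf_any[of "\<lambda>s. P0 (us r) + c (us r) s"]])
qed

lemma wt_int: "integrable Pi_env (\<lambda>\<xi>. wt \<xi> t us)"
  by (rule finite_measure.integrable_const_bound[OF env_fm, where B=1])
     (use wt_nonneg wt_le1 wt_meas in auto)

lemma wt_gam_meas: "(\<lambda>\<xi>. wt \<xi> t us * h (\<xi> j)) \<in> borel_measurable Pi_env"
  using wt_meas coord_fun_meas by (intro borel_measurable_times) auto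

lemma wt_gam_int: "integrable Pi_env (\<lambda>\<xi>. wt \<xi> t us * h (\<xi> j))"
proof (rule finite_measure.integrable_const_bound[OF env_fm, where B="\<Sum>s\<in>UNIV. \<bar>h s\<bar>"])
  show "AE x in Pi_env. norm (wt x t us * h (x j)) \<le> (\<Sum>s\<in>UNIV. \<bar>h s\<bar>)"
  proof (intro AE_I2)
    fix x
    have "\<bar>h (x j)\<bar> \<le> (\<Sum>s\<in>UNIV. \<bar>h s\<bar>)" by (rule member_le_sum) auto
    moreover have "\<bar>wt x t us\<bar> \<le> 1" using wt_nonneg[of x t us] wt_le1[of x t us] by simp
    ultimately have "\<bar>wt x t us\<bar> * \<bar>h (x j)\<bar> \<le> 1 * (\<Sum>s\<in>UNIV. \<bar>h s\<bar>)"
      by (intro mult_mono) auto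
    then show "norm (wt x t us * h (x j)) \<le> (\<Sum>s\<in>UNIV. \<bar>h s\<bar>)" by (simp add: abs_mult)
  qed
qed (rule wt_gam_meas)

lemma wt_indep:
  "(\<integral>\<xi>. wt \<xi> t us * h (\<xi> (t, pth x0 us t)) \<partial>Pi_env) = (\<integral>\<xi>. wt \<xi> t us \<partial>Pi_env) * (\<Sum>s\<in>UNIV. pmf \<pi> s * h s)"
proof -
  define J where "J = (\<lambda>r. (r, pth x0 us r)) ` {..<t}"
  define F' where "F' = (\<lambda>\<eta>. \<Prod>r<t. P0 (us r) + c (us r) (\<eta> (r, pth x0 us r)))"
  have e: "wt \<xi> t us = F' (restrict \<xi> J)" for \<xi>
    unfolding wt_def F'_def J_def by (intro prod.cong) auto
  have Fm: "F' \<in> borel_measurable (PiM J (\<lambda>_. measure_pmf \<pi>))"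
    unfolding F'_def
  proof (intro borel_measurable_prod)
    fix r assume "r \<in> {..<t}"
    then have "(r, pth x0 us r) \<in> J" unfolding J_def by auto
    then show "(\<lambda>\<eta>. P0 (us r) + c (us r) (\<eta> (r, pth x0 us r))) \<in> borel_measurable (PiM J (\<lambda>_. measure_pmf \<pi>))"
      by (intro measurable_compose[where N="measure_pmf \<pi>", OF _ borel_pmf_any])
         (rule measurable_component_singleton[where M="\<lambda>_. measure_pmf \<pi>"])
  qed
  have Fb: "\<bar>F' \<eta>\<bar> \<le> 1" for \<eta>
  proof -
    have "0 \<le> F' \<eta>" "F' \<eta> \<le> 1" unfolding F'_def using tb0 tb1
      by (auto intro!: prod_nonneg prod_le_1)
    then show ?thesis by simp
  qed
  have j: "(t, pth x0 us t) \<notin> J" unfolding J_def by auto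
  show ?thesis unfolding e by (rule env_indep[OF j Fm Fb])
qed

lemma gam_mean:
  assumes mean0: "(\<Sum>u\<in>U. f u * P0 u) = 0"
  shows "(\<Sum>s\<in>UNIV. pmf \<pi> s * gam f s) = 0"
proof -
  have "(\<Sum>s\<in>UNIV. pmf \<pi> s * gam f s) = (\<Sum>u\<in>U. f u * (P0 u * (\<Sum>s\<in>UNIV. pmf \<pi> s) + (\<Sum>s\<in>UNIV. c u s * pmf \<pi> s)))"
    unfolding gam_def by (simp add: sum_distrib_left sum_distrib_right sum.distrib algebra_simps sum.swap[of _ UNIV U])
  also have "\<dots> = (\<Sum>u\<in>U. f u * P0 u)" by (simp add: cmean sum_pmf_eq_1)
  finally show ?thesis using mean0 by simp
qed

lemma T_int: "integrable Pi_env (\<lambda>\<xi>. T f k \<xi> t)"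
  unfolding T_def mult.assoc by (intro Bochner_Integration.integrable_sum) (auto intro: wt_gam_int)

lemma T_int0:
  assumes mean0: "(\<Sum>u\<in>U. f u * P0 u) = 0"
  shows "(\<integral>\<xi>. T f k \<xi> t \<partial>Pi_env) = 0"
  unfolding T_def mult.assoc
  by (subst Bochner_Integration.integral_sum) (auto intro: wt_gam_int simp: wt_indep gam_mean[OF mean0])

lemma Q_int: "integrable Pi_env (\<lambda>\<xi>. Q f k \<xi> t)"
  unfolding Q_def by (intro Bochner_Integration.integrable_sum) (auto intro: wt_int)

lemma Q_meas: "(\<lambda>\<xi>. Q f k \<xi> t) \<in> borel_measurable Pi_env"
  using Q_int by blast

lemma Q4_nonneg: "0 \<le> Q f 4 \<xi> t"
  unfolding Q_def by (intro sum_nonneg mult_nonneg_nonneg wt_nonneg) (simp add: zero_le_even_power)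

lemma integrable_cst: "integrable Pi_env (\<lambda>_. a::real)"
  by (rule finite_measure.integrable_const[OF env_fm])

lemma int_cst: "(\<integral>\<xi>. a \<partial>Pi_env) = (a::real)"
  using prob_space.prob_space[OF env_ps] by simp

lemma E2_bound:
  assumes mean0: "(\<Sum>u\<in>U. f u * P0 u) = 0"
  shows "(\<integral>\<xi>. Q f 2 \<xi> t \<partial>Pi_env) \<le> Kf f ^ 2 * real t"
proof (induction t)
  case 0 then show ?case by (simp add: Q_0)
next
  case (Suc t)
  have i: "integrable Pi_env (\<lambda>\<xi>. 2 * T f 1 \<xi> t)" using T_int by auto
  have "(\<integral>\<xi>. Q f 2 \<xi> (Suc t) \<partial>Pi_env) \<le> (\<integral>\<xi>. Q f 2 \<xi> t + 2 * T f 1 \<xi> t + Kf f^2 \<partial>Pi_env)"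
    by (intro integral_mono Q_int Q2_step Bochner_Integration.integrable_add i integrable_cst)
  also have "\<dots> = (\<integral>\<xi>. Q f 2 \<xi> t \<partial>Pi_env) + 2 * (\<integral>\<xi>. T f 1 \<xi> t \<partial>Pi_env) + Kf f^2"
    using Q_int i integrable_cst prob_space.prob_space[OF env_ps]
    by (simp add: Bochner_Integration.integral_add)
  also have "\<dots> = (\<integral>\<xi>. Q f 2 \<xi> t \<partial>Pi_env) + Kf f^2" by (simp add: T_int0[OF mean0])
  finally show ?case using Suc by (simp add: algebra_simps)
qed


lemma sq_step: fixes y z C :: real
  shows "y + z \<le> C*(2*real n+1) \<Longrightarrow> C*(real n)^2 + y + z \<le> C*(real (Suc n))^2"
  by (simp add: power2_eq_square algebra_simps)

definition C4 :: "(int^'n \<Rightarrow> real) \<Rightarrow> real" where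
  "C4 f = (6*Kf f^2 + 4*Kf f^3) * Kf f^2 + (4*Kf f^3 + Kf f^4)"

lemma E4_bound:
  assumes mean0: "(\<Sum>u\<in>U. f u * P0 u) = 0"
  shows "(\<integral>\<xi>. Q f 4 \<xi> t \<partial>Pi_env) \<le> C4 f * real t ^ 2"
proof (induction t)
  case 0 then show ?case by (simp add: Q_0)
next
  case (Suc t)
  let ?K = "Kf f"
  let ?a = "(6*?K^2 + 4*?K^3)"
  let ?b = "(4*?K^3 + ?K^4)"
  have K0: "0 \<le> ?K" by (rule Kf_nonneg)
  have i: "integrable Pi_env (\<lambda>\<xi>. 4 * T f 3 \<xi> t)" using T_int by auto
  have i2: "integrable Pi_env (\<lambda>\<xi>. ?a * Q f 2 \<xi> t)" using Q_int by auto
  have "(\<integral>\<xi>. Q f 4 \<xi> (Suc t) \<partial>Pi_env) \<le> (\<integral>\<xi>. Q f 4 \<xi> t + 4 * T f 3 \<xi> t + ?a * Q f 2 \<xi> t + ?b \<partial>Pi_env)"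
    by (intro integral_mono Q_int Q4_step Bochner_Integration.integrable_add i i2 integrable_cst)
  also have "\<dots> = (\<integral>\<xi>. Q f 4 \<xi> t \<partial>Pi_env) + 4 * (\<integral>\<xi>. T f 3 \<xi> t \<partial>Pi_env) + ?a * (\<integral>\<xi>. Q f 2 \<xi> t \<partial>Pi_env) + ?b"
  proof -
    have e1: "(\<integral>\<xi>. Q f 4 \<xi> t + 4 * T f 3 \<xi> t + ?a * Q f 2 \<xi> t + ?b \<partial>Pi_env)
       = (\<integral>\<xi>. Q f 4 \<xi> t + 4 * T f 3 \<xi> t + ?a * Q f 2 \<xi> t \<partial>Pi_env) + (\<integral>\<xi>. ?b \<partial>Pi_env)"
      by (rule Bochner_Integration.integral_add[OF Bochner_Integration.integrable_add[OF Bochner_Integration.integrable_add[OF Q_int i] i2] integrable_cst])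
    have e2: "(\<integral>\<xi>. Q f 4 \<xi> t + 4 * T f 3 \<xi> t + ?a * Q f 2 \<xi> t \<partial>Pi_env)
       = (\<integral>\<xi>. Q f 4 \<xi> t + 4 * T f 3 \<xi> t \<partial>Pi_env) + (\<integral>\<xi>. ?a * Q f 2 \<xi> t \<partial>Pi_env)"
      by (rule Bochner_Integration.integral_add[OF Bochner_Integration.integrable_add[OF Q_int i] i2])
    have e3: "(\<integral>\<xi>. Q f 4 \<xi> t + 4 * T f 3 \<xi> t \<partial>Pi_env)
       = (\<integral>\<xi>. Q f 4 \<xi> t \<partial>Pi_env) + (\<integral>\<xi>. 4 * T f 3 \<xi> t \<partial>Pi_env)"
      by (rule Bochner_Integration.integral_add[OF Q_int i])
    show ?thesis unfolding e1 e2 e3 int_cst by simp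
  qed
  also have "\<dots> = (\<integral>\<xi>. Q f 4 \<xi> t \<partial>Pi_env) + ?a * (\<integral>\<xi>. Q f 2 \<xi> t \<partial>Pi_env) + ?b"
    by (simp add: T_int0[OF mean0])
  also have "\<dots> \<le> C4 f * real t ^ 2 + ?a * (?K^2 * real t) + ?b"
    using Suc E2_bound[OF mean0, of t] K0 by (intro add_mono mult_left_mono) auto
  also have "\<dots> \<le> C4 f * real (Suc t) ^ 2"
  proof -
    have a0: "0 \<le> ?a * ?K^2" "0 \<le> ?b" using K0 by auto
    have C0: "?a * ?K^2 \<le> C4 f" "?b \<le> C4 f" unfolding C4_def using a0 by auto
    have t0: "0 \<le> real t" by simp
    have h1: "?a*(?K^2*real t) \<le> C4 f * real t"
      using mult_right_mono[OF C0(1) t0] by (simp add: mult_ac)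
    have h2: "?b \<le> C4 f * (real t + 1)"
      using C0 a0 mult_left_mono[of 1 "real t + 1" "C4 f"] by simp
    have "?a * (?K^2 * real t) + ?b \<le> C4 f * (2 * real t + 1)"
      using add_mono[OF h1 h2] by (simp add: algebra_simps)
    then show ?thesis by (rule sq_step)
  qed
  finally show ?case .
qed

end

lemma AE_summable_gen:
  fixes g :: "nat \<Rightarrow> 'a \<Rightarrow> real"
  assumes meas: "\<And>t. g t \<in> borel_measurable M" and nn: "\<And>t \<omega>. 0 \<le> g t \<omega>"
    and bd: "\<And>t. (\<integral>\<^sup>+\<omega>. ennreal (g t \<omega>) \<partial>M) \<le> ennreal (b t)" and sb: "summable b" and b0: "\<And>t. 0 \<le> b t"
  shows "AE \<omega> in M. summable (\<lambda>t. g t \<omega>)"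
proof -
  have m: "(\<lambda>\<omega>. ennreal (g t \<omega>)) \<in> borel_measurable M" for t using meas[of t] by measurable
  have "(\<integral>\<^sup>+\<omega>. (\<Sum>t. ennreal (g t \<omega>)) \<partial>M) = (\<Sum>t. \<integral>\<^sup>+\<omega>. ennreal (g t \<omega>) \<partial>M)"
    by (rule nn_integral_suminf[OF m])
  also have "\<dots> \<le> (\<Sum>t. ennreal (b t))" by (intro suminf_le bd) auto
  also have "\<dots> = ennreal (suminf b)" by (rule suminf_ennreal2[OF b0 sb])
  finally have fin: "(\<integral>\<^sup>+\<omega>. (\<Sum>t. ennreal (g t \<omega>)) \<partial>M) \<noteq> \<infinity>"
    unfolding infinity_ennreal_def by (rule neq_top_trans[OF ennreal_neq_top])
  have "AE \<omega> in M. (\<Sum>t. ennreal (g t \<omega>)) \<noteq> \<infinity>"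
    by (rule nn_integral_PInf_AE[OF _ fin]) (use m in measurable)
  then show ?thesis
    by eventually_elim (rule summable_suminf_not_top[OF nn], simp)
qed

context rw begin

lemma AE_env_summable:
  assumes mean0: "(\<Sum>u\<in>U. f u * P0 u) = 0"
  shows "AE \<xi> in Pi_env. summable (\<lambda>t. Q f 4 \<xi> t / real t ^ 4)"
proof (rule AE_summable_gen[where b="\<lambda>t. C4 f * inverse (real t ^ 2)"])
  show "(\<lambda>\<xi>. Q f 4 \<xi> t / real t ^ 4) \<in> borel_measurable Pi_env" for t
    using Q_meas by measurable
  show "0 \<le> Q f 4 \<xi> t / real t ^ 4" for \<xi> t using Q4_nonneg by simp
  have C0: "0 \<le> C4 f" unfolding C4_def using Kf_nonneg[of f] by auto
  show "0 \<le> C4 f * inverse (real t ^ 2)" for t using C0 by simp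
  show "summable (\<lambda>t. C4 f * inverse (real t ^ 2))"
    by (intro summable_mult inverse_power_summable) simp
  show "(\<integral>\<^sup>+\<xi>. ennreal (Q f 4 \<xi> t / real t ^ 4) \<partial>Pi_env) \<le> ennreal (C4 f * inverse (real t ^ 2))" for t
  proof -
    have ii: "integrable Pi_env (\<lambda>\<xi>. Q f 4 \<xi> t / real t ^ 4)" using Q_int by auto
    have n1: "(\<integral>\<^sup>+\<xi>. ennreal (Q f 4 \<xi> t / real t ^ 4) \<partial>Pi_env) = ennreal (\<integral>\<xi>. Q f 4 \<xi> t / real t ^ 4 \<partial>Pi_env)"
      by (rule nn_integral_eq_integral[OF ii]) (simp add: Q4_nonneg)
    have n2: "(\<integral>\<xi>. Q f 4 \<xi> t / real t ^ 4 \<partial>Pi_env) = (\<integral>\<xi>. Q f 4 \<xi> t \<partial>Pi_env) / real t ^ 4"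
      by simp
    have n3: "(\<integral>\<xi>. Q f 4 \<xi> t \<partial>Pi_env) / real t ^ 4 \<le> C4 f * inverse (real t ^ 2)"
    proof (cases "t = 0")
      case True then show ?thesis by simp
    next
      case False
      then have tp: "0 < real t ^ 4" by simp
      have "(\<integral>\<xi>. Q f 4 \<xi> t \<partial>Pi_env) / real t ^ 4 \<le> C4 f * real t ^ 2 / real t ^ 4"
        by (intro divide_right_mono E4_bound[OF mean0]) (use tp in auto)
      also have "\<dots> = C4 f * inverse (real t ^ 2)" using False
        by (simp add: field_simps power_add[symmetric] eval_nat_numeral)
      finally show ?thesis .
    qed
    show ?thesis unfolding n1 n2 by (rule ennreal_leI[OF n3])
  qed
qed

end



context rw begin

definition Ev :: "'w measure \<Rightarrow> (nat \<Rightarrow> 'w \<Rightarrow> int^'n) \<Rightarrow> nat \<Rightarrow> (nat \<Rightarrow> int^'n) \<Rightarrow> 'w set" where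
  "Ev M X t us = {\<omega> \<in> space M. \<forall>s\<le>t. X s \<omega> = pth x0 us s}"

lemma Ev_sets:
  assumes "\<And>s. X s \<in> M \<rightarrow>\<^sub>M count_space UNIV"
  shows "Ev M X t us \<in> sets M"
proof -
  have "Ev M X t us = space M \<inter> (\<Inter>s\<in>{..t}. {\<omega> \<in> space M. X s \<omega> = pth x0 us s})"
    unfolding Ev_def by auto
  also have "\<dots> \<in> sets M"
  proof (intro sets.Int sets.top sets.finite_INT)
    fix s show "{\<omega> \<in> space M. X s \<omega> = pth x0 us s} \<in> sets M"
      using assms[of s] by measurable
  qed auto
  finally show ?thesis .
qed

lemma Ev_measure:
  assumes ch: "quenched_chain P0 c \<xi> x0 M X"
  shows "measure M (Ev M X t us) = wt \<xi> t us"
proof (induction t)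
  case 0
  have "Ev M X 0 us = {\<omega> \<in> space M. X 0 \<omega> = x0}" unfolding Ev_def by auto
  then show ?case using ch unfolding quenched_chain_def by (simp add: wt_def)
next
  case (Suc t)
  have "measure M (Ev M X (Suc t) us) = measure M (Ev M X t us) * trans_prob P0 c \<xi> t (pth x0 us t) (pth x0 us (Suc t))"
    using ch unfolding quenched_chain_def Ev_def by blast
  also have "trans_prob P0 c \<xi> t (pth x0 us t) (pth x0 us (Suc t)) = P0 (us t) + c (us t) (\<xi> (t, pth x0 us t))"
    unfolding trans_prob_def pth_Suc by simp
  finally show ?case using Suc by (simp add: wt_def)
qed

lemma Ev_disj:
  assumes "us \<in> PS U t" "us' \<in> PS U t" "\<omega> \<in> Ev M X t us" "\<omega> \<in> Ev M X t us'"
  shows "us = us'"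
proof
  fix r
  have p: "pth x0 us s = pth x0 us' s" if "s \<le> t" for s using assms(3,4) that unfolding Ev_def by auto
  show "us r = us' r"
  proof (cases "r < t")
    case True
    have "us r = pth x0 us (Suc r) - pth x0 us r" by (simp add: pth_Suc)
    also have "\<dots> = pth x0 us' (Suc r) - pth x0 us' r" using p True by simp
    also have "\<dots> = us' r" by (simp add: pth_Suc)
    finally show ?thesis .
  next
    case False
    then show ?thesis using assms(1,2) by (auto simp: PS_def PiE_def extensional_def)
  qed
qed

lemma AE_Ev:
  assumes ch: "quenched_chain P0 c \<xi> x0 M X"
  shows "AE \<omega> in M. \<exists>us\<in>PS U t. \<omega> \<in> Ev M X t us"
proof -
  interpret prob_space M using ch unfolding quenched_chain_def by blast
  have Xm: "\<And>s. X s \<in> M \<rightarrow>\<^sub>M count_space UNIV" using ch unfolding quenched_chain_def by blast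
  have Evs: "Ev M X t' us' \<in> sets M" for t' us' by (rule Ev_sets) (rule Xm)
  have S: "(\<Union>us\<in>PS U t. Ev M X t us) \<in> sets M"
    using Evs PS_finite[OF finU] by auto
  have "prob (\<Union>us\<in>PS U t. Ev M X t us) = (\<Sum>us\<in>PS U t. prob (Ev M X t us))"
  proof (rule finite_measure_finite_Union)
    show "disjoint_family_on (Ev M X t) (PS U t)"
      unfolding disjoint_family_on_def using Ev_disj[of _ t _ _ M X] by blast
    show "finite (PS U t)" by (rule PS_finite[OF finU])
    show "Ev M X t ` PS U t \<subseteq> sets M" using Evs by blast
  qed
  also have "\<dots> = 1" using Ev_measure[OF ch] sum_wt by simp
  finally have "AE \<omega> in M. \<omega> \<in> (\<Union>us\<in>PS U t. Ev M X t us)"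
    by (rule iffD2[OF AE_in_set_eq_1[OF S]])
  then show ?thesis by eventually_elim blast
qed

definition Sm :: "(int^'n \<Rightarrow> real) \<Rightarrow> (nat \<Rightarrow> 'w \<Rightarrow> int^'n) \<Rightarrow> nat \<Rightarrow> 'w \<Rightarrow> real" where
  "Sm f X t \<omega> = (\<Sum>r<t. f (X (Suc r) \<omega> - X r \<omega>))"

lemma Ev_Sm: "\<omega> \<in> Ev M X t us \<Longrightarrow> Sm f X t \<omega> = (\<Sum>r<t. f (us r))"
  unfolding Sm_def Ev_def by (intro sum.cong) (auto simp: pth_Suc)

lemma quenched_conv:
  assumes ch: "quenched_chain P0 c \<xi> x0 M X"
    and summ: "summable (\<lambda>t. Q f 4 \<xi> t / real t ^ 4)"
  shows "AE \<omega> in M. (\<lambda>t. Sm f X t \<omega> / real t) \<longlonglongrightarrow> 0"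
proof -
  interpret prob_space M using ch unfolding quenched_chain_def by blast
  have Xm: "\<And>s. X s \<in> M \<rightarrow>\<^sub>M count_space UNIV" using ch unfolding quenched_chain_def by blast
  have Evs: "Ev M X t' us' \<in> sets M" for t' us' by (rule Ev_sets) (rule Xm)
  define a where "a t us = (\<Sum>r<t. f (us r)) ^ 4 / real t ^ 4" for t us
  define g where "g t \<omega> = (\<Sum>us\<in>PS U t. a t us * indicator (Ev M X t us) \<omega>)" for t \<omega>
  have a0: "0 \<le> a t us" for t us unfolding a_def by (simp add: zero_le_even_power)
  have eq: "AE \<omega> in M. \<forall>t. Sm f X t \<omega> ^ 4 / real t ^ 4 = g t \<omega>"
  proof (subst AE_all_countable, intro allI)
    fix t
    show "AE \<omega> in M. Sm f X t \<omega> ^ 4 / real t ^ 4 = g t \<omega>"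
      using AE_Ev[OF ch, of t]
    proof eventually_elim
      case (elim \<omega>)
      then obtain us0 where us0: "us0 \<in> PS U t" "\<omega> \<in> Ev M X t us0" by blast
      have "g t \<omega> = (\<Sum>us\<in>PS U t. if us = us0 then a t us0 else 0)"
        unfolding g_def
      proof (rule sum.cong[OF refl])
        fix us assume us: "us \<in> PS U t"
        show "a t us * indicator (Ev M X t us) \<omega> = (if us = us0 then a t us0 else 0)"
        proof (cases "us = us0")
          case True then show ?thesis using us0 by simp
        next
          case False
          then have "\<omega> \<notin> Ev M X t us" using Ev_disj[OF us us0(1) _ us0(2)] by blast
          then show ?thesis using False by simp
        qed
      qed
      also have "\<dots> = a t us0" using us0 PS_finite[OF finU] by simp
      finally show ?case using Ev_Sm[OF us0(2)] unfolding a_def by simp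
    qed
  qed
  have gm: "g t \<in> borel_measurable M" for t
    unfolding g_def by (intro borel_measurable_sum borel_measurable_times borel_measurable_const borel_measurable_indicator Evs)
  have ii: "integrable M (indicator (Ev M X t' us') :: _ \<Rightarrow> real)" for t' us'
  proof (rule integrable_real_indicator[OF Evs])
    have "emeasure M (Ev M X t' us') \<noteq> top" by (rule emeasure_finite)
    then show "emeasure M (Ev M X t' us') < \<infinity>" unfolding infinity_ennreal_def by (rule top.not_eq_extremum[THEN iffD1])
  qed
  have sub: "Ev M X t' us' \<inter> space M = Ev M X t' us'" for t' us' unfolding Ev_def by blast
  have gi: "integrable M (g t)" for t
    unfolding g_def
    by (rule Bochner_Integration.integrable_sum, rule integrable_mult_right, rule ii)
  have gint: "(\<integral>\<omega>. g t \<omega> \<partial>M) = Q f 4 \<xi> t / real t ^ 4" for t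
  proof -
    have "(\<integral>\<omega>. g t \<omega> \<partial>M) = (\<Sum>us\<in>PS U t. a t us * measure M (Ev M X t us))"
    proof -
      have "(\<integral>\<omega>. g t \<omega> \<partial>M) = (\<Sum>us\<in>PS U t. \<integral>\<omega>. a t us * indicator (Ev M X t us) \<omega> \<partial>M)"
        unfolding g_def by (rule Bochner_Integration.integral_sum) (intro integrable_mult_right ii)
      also have "\<dots> = (\<Sum>us\<in>PS U t. a t us * measure M (Ev M X t us))"
        by (intro sum.cong refl) (simp add: sub)
      finally show ?thesis .
    qed
    also have "\<dots> = Q f 4 \<xi> t / real t ^ 4"
      unfolding Q_def a_def Ev_measure[OF ch] by (simp add: sum_divide_distrib)
    finally show ?thesis .
  qed
  have g0: "0 \<le> g t \<omega>" for t \<omega> unfolding g_def using a0 by (intro sum_nonneg) auto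
  have "AE \<omega> in M. summable (\<lambda>t. g t \<omega>)"
  proof (rule AE_summable_gen[where b="\<lambda>t. Q f 4 \<xi> t / real t ^ 4", OF gm g0 _ summ])
    show "0 \<le> Q f 4 \<xi> t / real t ^ 4" for t using Q4_nonneg by simp
    show "(\<integral>\<^sup>+\<omega>. ennreal (g t \<omega>) \<partial>M) \<le> ennreal (Q f 4 \<xi> t / real t ^ 4)" for t
      using nn_integral_eq_integral[OF gi] g0 gint by simp
  qed
  then show ?thesis using eq
  proof eventually_elim
    case (elim \<omega>)
    have "summable (\<lambda>t. (Sm f X t \<omega> / real t) ^ 4)"
      using elim by (simp add: power_divide)
    then have "(\<lambda>t. (Sm f X t \<omega> / real t) ^ 4) \<longlonglongrightarrow> 0" by (rule summable_LIMSEQ_zero)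
    then have r: "(\<lambda>t. root 4 ((Sm f X t \<omega> / real t) ^ 4)) \<longlonglongrightarrow> root 4 0" by (rule tendsto_real_root)
    have e: "root 4 (x ^ 4) = \<bar>x\<bar>" for x :: real
      by (rule real_root_pos_unique) (auto simp: power_even_abs)
    from r have "(\<lambda>t. \<bar>Sm f X t \<omega> / real t\<bar>) \<longlonglongrightarrow> 0" unfolding e by simp
    then show ?case by (simp only: tendsto_rabs_zero_iff)
  qed
qed

end



lemma infsum_U:
  fixes h :: "'a \<Rightarrow> real"
  assumes "finite U" "\<And>u. u \<notin> U \<Longrightarrow> h u = 0"
  shows "(\<Sum>\<^sub>\<infinity>u. h u) = (\<Sum>u\<in>U. h u)"
proof -
  have "(\<Sum>\<^sub>\<infinity>u. h u) = (\<Sum>\<^sub>\<infinity>u\<in>U. h u)"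
    by (rule infsum_cong_neutral) (use assms in auto)
  then show ?thesis using assms by simp
qed

lemma finite_box:
  fixes R :: int
  shows "finite {u :: int^'n. \<forall>i. \<bar>u $ i\<bar> \<le> R}"
proof -
  have "{u :: int^'n. \<forall>i. \<bar>u $ i\<bar> \<le> R} \<subseteq> (\<lambda>f. \<chi> i. f i) ` (PiE UNIV (\<lambda>_. {-R..R}))"
  proof
    fix u :: "int^'n" assume "u \<in> {u. \<forall>i. \<bar>u $ i\<bar> \<le> R}"
    then have "\<bar>u $ i\<bar> \<le> R" for i by blast
    then have h: "-R \<le> u $ i \<and> u $ i \<le> R" for i by (metis abs_le_D1 abs_le_D2 minus_le_iff)
    then have "(\<lambda>i. u $ i) \<in> PiE UNIV (\<lambda>_. {-R..R})" by auto
    moreover have "u = (\<chi> i. (\<lambda>i. u $ i) i)" by simp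
    ultimately show "u \<in> (\<lambda>f. \<chi> i. f i) ` (PiE UNIV (\<lambda>_. {-R..R}))" by blast
  qed
  moreover have "finite ((\<lambda>f. \<chi> i. f i) ` (PiE UNIV (\<lambda>_. {-R..R})) :: (int^'n) set)"
    by (intro finite_imageI finite_PiE) auto
  ultimately show ?thesis by (rule finite_subset)
qed

theorem lemma3p3:
  fixes \<pi> :: "'S::finite pmf"
    and P0 :: "int^'n \<Rightarrow> real"
    and c :: "int^'n \<Rightarrow> 'S \<Rightarrow> real"
    and bc :: "real^'n"
    and x0 :: "int^'n"
  assumes P0_nonneg: "\<forall>u. P0 u \<ge> 0"
    and P0_sum: "(\<Sum>\<^sub>\<infinity>u. P0 u) = 1"
    and trans_bounds: "\<forall>u s. 0 \<le> P0 u + c u s \<and> P0 u + c u s \<le> 1"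
    and c_sum_u: "\<forall>s. (\<Sum>\<^sub>\<infinity>u. c u s) = 0"
    and c_mean_zero: "\<forall>u. (\<Sum>s\<in>UNIV. c u s * pmf \<pi> s) = 0"
    and bounded_range: "\<exists>R::int. \<forall>u s. (\<exists>i. \<bar>u $ i\<bar> > R) \<longrightarrow> P0 u = 0 \<and> c u s = 0"
    and drift_c: "\<forall>s i. (\<Sum>\<^sub>\<infinity>u. real_of_int (u $ i) * c u s) = bc $ i"
  shows "AE \<xi> in env_law \<pi>.
     (\<forall>(M :: 'w measure) X. quenched_chain P0 c \<xi> x0 M X \<longrightarrow>
        (AE \<omega> in M.
          ((\<lambda>t. (1 / real t) *\<^sub>R quad_var
                  ((\<chi> i. (\<Sum>\<^sub>\<infinity>u. real_of_int (u $ i) * P0 u)) + bc) X t \<omega>)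
            \<longlonglongrightarrow>
           (\<chi> i j. \<Sum>\<^sub>\<infinity>u.
              (real_of_int (u $ i) - ((\<chi> i. (\<Sum>\<^sub>\<infinity>u. real_of_int (u $ i) * P0 u)) + bc) $ i) *
              (real_of_int (u $ j) - ((\<chi> i. (\<Sum>\<^sub>\<infinity>u. real_of_int (u $ i) * P0 u)) + bc) $ j) *
              (P0 u + (\<Sum>s\<in>UNIV. pmf \<pi> s * c u s))))))"
proof -
  obtain R :: int where R: "\<forall>u s. (\<exists>i. \<bar>u $ i\<bar> > R) \<longrightarrow> P0 u = 0 \<and> c u s = 0"
    using bounded_range by blast
  define U where "U = {u :: int^'n. \<forall>i. \<bar>u $ i\<bar> \<le> R}"
  have finU: "finite U" unfolding U_def by (rule finite_box)
  have out: "P0 u = 0 \<and> c u s = 0" if "u \<notin> U" for u s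
  proof -
    from that obtain i where "\<bar>u $ i\<bar> > R" unfolding U_def by (auto simp: not_le)
    then show ?thesis using R by blast
  qed
  have sumP0: "(\<Sum>u\<in>U. P0 u) = 1" using P0_sum infsum_U[OF finU, of P0] out by simp
  have sumc: "(\<Sum>u\<in>U. c u s) = 0" for s
    using c_sum_u infsum_U[OF finU, of "\<lambda>u. c u s"] out by simp
  interpret rw \<pi> P0 c U x0
    by unfold_locales (use finU sumP0 sumc trans_bounds c_mean_zero in auto)
  obtain b where b: "b = ((\<chi> i. (\<Sum>\<^sub>\<infinity>u. real_of_int (u $ i) * P0 u)) + bc)" by blast
  define \<phi> where "\<phi> i j u = (real_of_int (u $ i) - b $ i) * (real_of_int (u $ j) - b $ j)" for i j u
  define m where "m i j = (\<Sum>u\<in>U. \<phi> i j u * P0 u)" for i j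
  define f where "f i j u = \<phi> i j u - m i j" for i j u
  have mean0: "(\<Sum>u\<in>U. f i j u * P0 u) = 0" for i j
  proof -
    have "(\<Sum>u\<in>U. f i j u * P0 u) = (\<Sum>u\<in>U. \<phi> i j u * P0 u) - m i j * (\<Sum>u\<in>U. P0 u)"
      unfolding f_def by (simp add: left_diff_distrib sum_subtractf sum_distrib_left)
    then show ?thesis using sumP0 by (simp add: m_def)
  qed
  have tgt: "(\<Sum>\<^sub>\<infinity>u. (real_of_int (u $ i) - b $ i) * (real_of_int (u $ j) - b $ j) *
              (P0 u + (\<Sum>s\<in>UNIV. pmf \<pi> s * c u s))) = m i j" for i j
  proof -
    have z: "(\<Sum>s\<in>UNIV. pmf \<pi> s * c u s) = 0" for u using c_mean_zero by (simp add: mult.commute)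
    have "(\<Sum>\<^sub>\<infinity>u. (real_of_int (u $ i) - b $ i) * (real_of_int (u $ j) - b $ j) *
              (P0 u + (\<Sum>s\<in>UNIV. pmf \<pi> s * c u s))) = (\<Sum>\<^sub>\<infinity>u. \<phi> i j u * P0 u)"
      unfolding z \<phi>_def by simp
    also have "\<dots> = m i j" unfolding m_def by (rule infsum_U[OF finU]) (use out in auto)
    finally show ?thesis .
  qed
  have AEs: "AE \<xi> in env_law \<pi>. \<forall>p\<in>UNIV. summable (\<lambda>t. Q (f (fst p) (snd p)) 4 \<xi> t / real t ^ 4)"
    unfolding env_law_def by (rule AE_finite_allI) (auto intro: AE_env_summable mean0)
  show ?thesis unfolding b[symmetric] using AEs
  proof eventually_elim
    case (elim \<xi>)
    show ?case
    proof (intro allI impI)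
      fix M :: "'w measure" and X assume ch: "quenched_chain P0 c \<xi> x0 M X"
      have "AE \<omega> in M. \<forall>p\<in>UNIV. (\<lambda>t. Sm (f (fst p) (snd p)) X t \<omega> / real t) \<longlonglongrightarrow> 0"
        by (rule AE_finite_allI) (use elim quenched_conv[OF ch] in auto)
      then show "AE \<omega> in M. (\<lambda>t. (1 / real t) *\<^sub>R quad_var b X t \<omega>) \<longlonglongrightarrow>
           (\<chi> i j. \<Sum>\<^sub>\<infinity>u. (real_of_int (u $ i) - b $ i) * (real_of_int (u $ j) - b $ j) *
              (P0 u + (\<Sum>s\<in>UNIV. pmf \<pi> s * c u s)))"
      proof eventually_elim
        case (elim \<omega>)
        show ?case
        proof (rule vec_tendstoI, rule vec_tendstoI)
          fix i j
          have conv: "(\<lambda>t. Sm (f i j) X t \<omega> / real t) \<longlonglongrightarrow> 0" using elim by auto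
          have trm: "real_of_int (X (Suc r) \<omega> $ i) - real (Suc r) * b $ i - (real_of_int (X r \<omega> $ i) - real r * b $ i) =
              real_of_int ((X (Suc r) \<omega> - X r \<omega>) $ i) - b $ i" for r i
            by (simp add: algebra_simps)
          have entry: "((1 / real t) *\<^sub>R quad_var b X t \<omega>) $ i $ j = Sm (f i j) X t \<omega> / real t + m i j"
            if "t > 0" for t
          proof -
            have "quad_var b X t \<omega> $ i $ j = (\<Sum>r<t. \<phi> i j (X (Suc r) \<omega> - X r \<omega>))"
              unfolding quad_var_def \<phi>_def trm by simp
            also have "\<dots> = Sm (f i j) X t \<omega> + real t * m i j"
              unfolding Sm_def f_def by (simp add: sum_subtractf)
            finally show ?thesis using that by (simp add: field_simps)
          qed
          have lim: "(\<lambda>t. Sm (f i j) X t \<omega> / real t + m i j) \<longlonglongrightarrow> m i j"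
            using tendsto_add[OF conv tendsto_const[of "m i j"]] by simp
          have ev: "eventually (\<lambda>t. ((1 / real t) *\<^sub>R quad_var b X t \<omega>) $ i $ j = Sm (f i j) X t \<omega> / real t + m i j) sequentially"
            using eventually_gt_at_top[of 0] by eventually_elim (rule entry)
          have "(\<lambda>t. ((1 / real t) *\<^sub>R quad_var b X t \<omega>) $ i $ j) \<longlonglongrightarrow> m i j"
            using tendsto_cong[OF ev] lim by simp
          then show "(\<lambda>t. ((1 / real t) *\<^sub>R quad_var b X t \<omega>) $ i $ j) \<longlonglongrightarrow>
             (\<chi> i j. \<Sum>\<^sub>\<infinity>u. (real_of_int (u $ i) - b $ i) * (real_of_int (u $ j) - b $ j) *
              (P0 u + (\<Sum>s\<in>UNIV. pmf \<pi> s * c u s))) $ i $ j"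
            using tgt by simp
        qed
      qed
    qed
  qed
qed


end
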